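(* Let $\Phi$ be a real $N\times d$ matrix satisfying the Restricted Isometry Condition with parameters $(2n,\varepsilon)$, $\varepsilon = 0.03/\sqrt{\log n}$, let $v \ne 0$ be $n$-sparse, $x = \Phi v$, and consider an iteration of ROMP run on $x$ with sparsity level $n$, with $I$ the index set and $r\neq 0$ the residual at the start of that iteration. Let $v_0 = v|_{\mathrm{supp}(v)\setminus I}$ (the vector equal to $v$ on $\mathrm{supp}(v)\setminus I$ and $0$ elsewhere) and $x_0 = \Phi v_0$. Then $\|x_0 - r\|_2 \le 2.2\,\varepsilon\,\|x_0\|_2$.
   Context: A vector is $n$-sparse if it has at most $n$ nonzero coordinates. $\Phi$ satisfies the Restricted Isometry Condition with parameters $(m,\varepsilon)$ if $(1-\varepsilon)\|w\|_2 \le \|\Phi w\|_2 \le (1+\varepsilon)\|w\|_2$ for all $m$-sparse $w$. $y|_T$ is the restriction of $y$ to coordinates in $T$. ROMP with input $x$ and sparsity level $n$: Initialize $I=\emptyset$, $r=x$. Repeat until $r=0$: (Identify) $u=\Phi^*r$, choose a set $J$ of the $n$ biggest coordinates of $u$ in magnitude, or all nonzero coordinates of $u$, whichever set is smaller; (Regularize) among subsets $J_0\subset J$ with $|u(i)|\le 2|u(j)|$ for all $i,j\in J_0$, choose one maximizing $\|u|_{J_0}\|_2$; (Update) $I\leftarrow I\cup J_0$, $y=\operatorname{argmin}_{z\in\mathbb{R}^I}\|x-\Phi z\|_2$, $r=x-\Phi y$. Output $I$. *)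

theory Defs
  imports "HOL-Analysis.Analysis"
begin

definition supp :: "real ^ 'd \<Rightarrow> 'd set" where
  "supp w = {i. w $ i \<noteq> 0}"

definition sparse :: "nat \<Rightarrow> real ^ 'd \<Rightarrow> bool" where
  "sparse n w \<longleftrightarrow> card (supp w) \<le> n"

definition RIC :: "real ^ 'd ^ 'N \<Rightarrow> nat \<Rightarrow> real \<Rightarrow> bool" where
  "RIC Phi m eps \<longleftrightarrow>
     (\<forall>w. sparse m w \<longrightarrow>
        (1 - eps) * norm w \<le> norm (Phi *v w) \<and> norm (Phi *v w) \<le> (1 + eps) * norm w)"

definition restrict_vec :: "real ^ 'd \<Rightarrow> 'd set \<Rightarrow> real ^ 'd" where
  "restrict_vec y T = (\<chi> i. if i \<in> T then y $ i else 0)"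

definition romp_identify :: "nat \<Rightarrow> real ^ 'd \<Rightarrow> 'd set \<Rightarrow> bool" where
  "romp_identify n u J \<longleftrightarrow>
     (if card (supp u) \<le> n then J = supp u
      else card J = n \<and> (\<forall>i\<in>J. \<forall>j. j \<notin> J \<longrightarrow> \<bar>u $ j\<bar> \<le> \<bar>u $ i\<bar>))"

definition comparable :: "real ^ 'd \<Rightarrow> 'd set \<Rightarrow> bool" where
  "comparable u J0 \<longleftrightarrow> (\<forall>i\<in>J0. \<forall>j\<in>J0. \<bar>u $ i\<bar> \<le> 2 * \<bar>u $ j\<bar>)"

definition romp_regularize :: "real ^ 'd \<Rightarrow> 'd set \<Rightarrow> 'd set \<Rightarrow> bool" where
  "romp_regularize u J J0 \<longleftrightarrow>
     J0 \<subseteq> J \<and> comparable u J0 \<and>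
     (\<forall>J1. J1 \<subseteq> J \<and> comparable u J1 \<longrightarrow>
        norm (restrict_vec u J1) \<le> norm (restrict_vec u J0))"

definition lsq_on :: "real ^ 'd ^ 'N \<Rightarrow> real ^ 'N \<Rightarrow> 'd set \<Rightarrow> real ^ 'd \<Rightarrow> bool" where
  "lsq_on Phi x I y \<longleftrightarrow>
     supp y \<subseteq> I \<and> (\<forall>z. supp z \<subseteq> I \<longrightarrow> norm (x - Phi *v y) \<le> norm (x - Phi *v z))"

text \<open>States (I, r) = (index set, residual) reached at the start of some iteration of
  ROMP run on input x with sparsity level n.\<close>
inductive romp_state :: "real ^ 'd ^ 'N \<Rightarrow> real ^ 'N \<Rightarrow> nat \<Rightarrow> 'd set \<Rightarrow> real ^ 'N \<Rightarrow> bool"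
  for Phi :: "real ^ 'd ^ 'N" and x :: "real ^ 'N" and n :: nat where
  init: "romp_state Phi x n {} x"
| step: "\<lbrakk> romp_state Phi x n I r; r \<noteq> 0;
           romp_identify n (transpose Phi *v r) J;
           romp_regularize (transpose Phi *v r) J J0;
           lsq_on Phi x (I \<union> J0) y \<rbrakk>
         \<Longrightarrow> romp_state Phi x n (I \<union> J0) (x - Phi *v y)"

end

theory Submission
  imports Defs "HOL-Analysis.Complex_Transcendental"
begin

lemma restrict_nth[simp]: "restrict_vec y T $ i = (if i \<in> T then y $ i else 0)"
  by (simp add: restrict_vec_def)

lemma supp_restrict: "supp (restrict_vec y T) \<subseteq> T \<inter> supp y"
  by (auto simp: supp_def)

lemma norm_sq_sum: "(norm (x::real^'d))\<^sup>2 = (\<Sum>i\<in>UNIV. (x$i)\<^sup>2)"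
  by (simp add: power2_norm_eq_inner inner_vec_def power2_eq_square[symmetric])

lemma norm_restrict_sq: "(norm (restrict_vec (y::real^'d) T))\<^sup>2 = (\<Sum>i\<in>T. (y$i)\<^sup>2)"
proof -
  have "(\<Sum>i\<in>UNIV. (restrict_vec y T $ i)\<^sup>2) = (\<Sum>i\<in>UNIV. if i \<in> T then (y$i)\<^sup>2 else 0)"
    by (rule sum.cong) auto
  also have "\<dots> = (\<Sum>i\<in>T. (y$i)\<^sup>2)"
    by (simp add: sum.If_cases)
  finally show ?thesis by (simp add: norm_sq_sum)
qed

lemma inner_restrict: "inner (y::real^'d) (restrict_vec y T) = (norm (restrict_vec y T))\<^sup>2"
proof -
  have "inner y (restrict_vec y T) = (\<Sum>i\<in>UNIV. if i \<in> T then (y$i)\<^sup>2 else 0)"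
    unfolding inner_vec_def by (rule sum.cong) (auto simp: power2_eq_square)
  also have "\<dots> = (\<Sum>i\<in>T. (y$i)\<^sup>2)"
    by (simp add: sum.If_cases)
  finally show ?thesis by (simp add: norm_restrict_sq)
qed

lemma sparse_subset: "supp (w::real^'d) \<subseteq> S \<Longrightarrow> card S \<le> m \<Longrightarrow> sparse m w"
  unfolding sparse_def by (meson card_mono finite order_trans)

lemma supp_scaleR: "supp (c *\<^sub>R (w::real^'d)) \<subseteq> supp w"
  by (auto simp: supp_def)

lemma supp_add: "supp ((a::real^'d) + b) \<subseteq> supp a \<union> supp b"
  by (auto simp: supp_def)

lemma supp_diff: "supp ((a::real^'d) - b) \<subseteq> supp a \<union> supp b"
  by (auto simp: supp_def)

lemma ric_delta:
  assumes "RIC Phi m e" "0 \<le> e" "e \<le> 1" "sparse m w"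
  shows "\<bar>(norm (Phi *v w))\<^sup>2 - (norm w)\<^sup>2\<bar> \<le> (2*e + e\<^sup>2) * (norm w)\<^sup>2"
proof -
  have l: "(1-e) * norm w \<le> norm (Phi *v w)" and u: "norm (Phi *v w) \<le> (1+e) * norm w"
    using assms unfolding RIC_def by auto
  have l2: "((1-e) * norm w)\<^sup>2 \<le> (norm (Phi *v w))\<^sup>2"
    using l assms by (intro power_mono) auto
  have u2: "(norm (Phi *v w))\<^sup>2 \<le> ((1+e) * norm w)\<^sup>2"
    using u by (intro power_mono) auto
  have h1: "((1+e) * norm w)\<^sup>2 = (norm w)\<^sup>2 + (2*e + e\<^sup>2) * (norm w)\<^sup>2"
    by (simp add: power2_eq_square algebra_simps)
  have h2: "((1-e) * norm w)\<^sup>2 = (norm w)\<^sup>2 - (2*e - e\<^sup>2) * (norm w)\<^sup>2"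
    by (simp add: power2_eq_square algebra_simps)
  have "(2*e - e\<^sup>2) * (norm w)\<^sup>2 \<le> (2*e + e\<^sup>2) * (norm w)\<^sup>2"
    by (intro mult_right_mono) auto
  then show ?thesis using l2 u2 h1 h2 unfolding abs_le_iff by linarith
qed

lemma polar: "(norm (p + q))\<^sup>2 - (norm (p - q))\<^sup>2 = 4 * inner p (q::'a::real_inner)"
  by (simp add: power2_norm_eq_inner inner_add inner_diff inner_commute algebra_simps)

lemma parallel: "(norm (p + q))\<^sup>2 + (norm (p - q))\<^sup>2 = 2 * (norm p)\<^sup>2 + 2 * (norm (q::'a::real_inner))\<^sup>2"
  by (simp add: power2_norm_eq_inner inner_add inner_diff inner_commute algebra_simps)

lemma ric_bilin_unit:
  assumes "RIC Phi m e" "0 \<le> e" "e \<le> 1" "card (supp a \<union> supp b) \<le> m"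
    and "norm a = 1" "norm b = 1"
  shows "\<bar>inner (Phi *v a) (Phi *v b) - inner a b\<bar> \<le> 2*e + e\<^sup>2"
proof -
  have sp: "sparse m (a + b)" "sparse m (a - b)"
    using sparse_subset[OF supp_add assms(4)] sparse_subset[OF supp_diff assms(4)] by auto
  have d1: "\<bar>(norm (Phi *v a + Phi *v b))\<^sup>2 - (norm (a+b))\<^sup>2\<bar> \<le> (2*e + e\<^sup>2) * (norm (a+b))\<^sup>2"
    using ric_delta[OF assms(1-3) sp(1)] by (simp add: matrix_vector_right_distrib)
  have d2: "\<bar>(norm (Phi *v a - Phi *v b))\<^sup>2 - (norm (a-b))\<^sup>2\<bar> \<le> (2*e + e\<^sup>2) * (norm (a-b))\<^sup>2"
    using ric_delta[OF assms(1-3) sp(2)] by (simp add: matrix_vector_mult_diff_distrib)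
  have p1: "4 * inner (Phi *v a) (Phi *v b) = (norm (Phi *v a + Phi *v b))\<^sup>2 - (norm (Phi *v a - Phi *v b))\<^sup>2"
    by (simp add: polar)
  have p2: "4 * inner a b = (norm (a+b))\<^sup>2 - (norm (a-b))\<^sup>2" by (simp add: polar)
  have p3: "(norm (a + b))\<^sup>2 + (norm (a - b))\<^sup>2 = 4" using parallel[of a b] assms by simp
  define d where "d = 2*e + e\<^sup>2"
  have p4: "d * (norm (a+b))\<^sup>2 + d * (norm (a-b))\<^sup>2 = 4 * d" using p3 by (simp add: distrib_left[symmetric])
  show ?thesis using d1 d2 p1 p2 p4 unfolding abs_le_iff d_def[symmetric] by linarith
qed

lemma ric_bilin:
  assumes "RIC Phi m e" "0 \<le> e" "e \<le> 1" "card (supp a \<union> supp b) \<le> m"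
  shows "\<bar>inner (Phi *v a) (Phi *v b) - inner a b\<bar> \<le> (2*e + e\<^sup>2) * norm a * norm b"
proof (cases "a = 0 \<or> b = 0")
  case True then show ?thesis by auto
next
  case False
  define a' where "a' = (1 / norm a) *\<^sub>R a"
  define b' where "b' = (1 / norm b) *\<^sub>R b"
  have na: "norm a' = 1" "norm b' = 1" using False by (auto simp: a'_def b'_def)
  have "card (supp a' \<union> supp b') \<le> m"
    using assms(4) supp_scaleR[of _ a] supp_scaleR[of _ b] unfolding a'_def b'_def
    by (meson Un_mono card_mono finite order_trans)
  from ric_bilin_unit[OF assms(1-3) this na]
  have "\<bar>inner (Phi *v a') (Phi *v b') - inner a' b'\<bar> \<le> 2*e + e\<^sup>2" .
  moreover have "inner (Phi *v a') (Phi *v b') - inner a' b' = (inner (Phi *v a) (Phi *v b) - inner a b) / (norm a * norm b)"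
    by (simp add: a'_def b'_def matrix_vector_mult_scaleR diff_divide_distrib ac_simps)
  ultimately have "\<bar>inner (Phi *v a) (Phi *v b) - inner a b\<bar> / (norm a * norm b) \<le> 2*e + e\<^sup>2"
    using False by (simp add: abs_div)
  then show ?thesis using False by (simp add: divide_le_eq mult.assoc)
qed

lemma lsq_orth:
  assumes "lsq_on Phi x I y" "supp z \<subseteq> I"
  shows "inner (x - Phi *v y) (Phi *v z) = 0"
proof -
  define e where "e = x - Phi *v y"
  define p where "p = Phi *v z"
  define c where "c = inner e p"
  define q where "q = (norm p)\<^sup>2"
  have q0: "q \<ge> 0" by (simp add: q_def)
  define t where "t = c / (q + 1)"
  have "supp (y + t *\<^sub>R z) \<subseteq> I"
    using assms supp_add[of y "t *\<^sub>R z"] supp_scaleR[of t z] unfolding lsq_on_def by blast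
  then have "norm e \<le> norm (x - Phi *v (y + t *\<^sub>R z))"
    using assms(1) unfolding lsq_on_def e_def by blast
  also have "x - Phi *v (y + t *\<^sub>R z) = e - t *\<^sub>R p"
    by (simp add: e_def p_def matrix_vector_right_distrib matrix_vector_mult_scaleR)
  finally have "(norm e)\<^sup>2 \<le> (norm (e - t *\<^sub>R p))\<^sup>2" by (simp add: power_mono)
  moreover
  have i1: "(norm (e - t *\<^sub>R p))\<^sup>2 = inner (e - t *\<^sub>R p) (e - t *\<^sub>R p)"
    by (rule power2_norm_eq_inner)
  have i2: "inner (e - t *\<^sub>R p) (e - t *\<^sub>R p) = inner e e - 2*t*c + t\<^sup>2*inner p p"
    by (simp add: inner_diff inner_commute c_def power2_eq_square algebra_simps)
  have i3: "inner e e = (norm e)\<^sup>2" "inner p p = q" by (simp_all add: q_def power2_norm_eq_inner)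
  have "(norm (e - t *\<^sub>R p))\<^sup>2 = (norm e)\<^sup>2 - 2*t*c + t\<^sup>2*q"
    unfolding i1 i2 i3 ..
  ultimately have "0 \<le> - 2 * t * c + t\<^sup>2 * q" by linarith
  have tq: "t * (q+1) = c" using q0 by (simp add: t_def)
  have "(- 2 * t * c + t\<^sup>2 * q) * (q+1)\<^sup>2 = - 2 * c * (t * (q+1)) * (q+1) + (t * (q+1))\<^sup>2 * q"
    by (simp add: power2_eq_square algebra_simps)
  also have "\<dots> = - c\<^sup>2 * (q + 2)"
    unfolding tq by (simp add: power2_eq_square algebra_simps)
  finally have eq: "(- 2 * t * c + t\<^sup>2 * q) * (q+1)\<^sup>2 = - c\<^sup>2 * (q + 2)" .
  have "0 \<le> (- 2 * t * c + t\<^sup>2 * q) * (q+1)\<^sup>2" using \<open>0 \<le> - 2 * t * c + t\<^sup>2 * q\<close> by simp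
  then have "c\<^sup>2 * (q+2) \<le> 0" unfolding eq by simp
  moreover have "0 < q + 2" using q0 by simp
  ultimately have "c\<^sup>2 \<le> 0" by (simp add: mult_le_0_iff)
  then have "c = 0" by simp
  then show ?thesis by (simp add: c_def e_def p_def)
qed


lemma supp_empty_iff: "supp (z::real^'d) \<subseteq> {} \<longleftrightarrow> z = 0"
  by (auto simp: supp_def vec_eq_iff)

lemma supp_eq_empty_iff[simp]: "supp (z::real^'d) = {} \<longleftrightarrow> z = 0"
  by (auto simp: supp_def vec_eq_iff)

lemma inner_disjoint: "supp (a::real^'d) \<inter> supp b = {} \<Longrightarrow> inner a b = 0"
  unfolding inner_vec_def by (rule sum.neutral) (auto simp: supp_def)

lemma state_orth:
  assumes "romp_state Phi x n I r"
  shows "\<exists>y. supp y \<subseteq> I \<and> r = x - Phi *v y \<and> (\<forall>z. supp z \<subseteq> I \<longrightarrow> inner r (Phi *v z) = 0)"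
  using assms
proof induction
  case init
  show ?case by (rule exI[of _ 0]) (simp add: supp_empty_iff)
next
  case (step I r J J0 y)
  then show ?case using lsq_orth[OF step(5)] unfolding lsq_on_def by blast
qed

lemma core34:
  fixes Phi :: "real^'d^'N"
  assumes ric: "RIC Phi (2*n) e" and e0: "0 \<le> e" and e1: "e \<le> 0.037"
    and y: "supp y \<subseteq> I" and r: "r = Phi *v v - Phi *v y"
    and orth: "\<forall>z. supp z \<subseteq> I \<longrightarrow> inner r (Phi *v z) = 0"
    and card: "card (I \<union> supp v) \<le> 2*n"
  shows "norm (Phi *v restrict_vec v (supp v - I) - r) \<le> 2.2*e*norm (Phi *v restrict_vec v (supp v - I))"
proof -
  define v0 where "v0 = restrict_vec v (supp v - I)"
  define w where "w = y - restrict_vec v I"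
  have vsplit: "v = restrict_vec v I + v0"
    by (auto simp: vec_eq_iff v0_def supp_def)
  have dw: "Phi *v v0 - r = Phi *v w"
    by (subst r, subst vsplit) (simp add: w_def matrix_vector_right_distrib matrix_vector_mult_diff_distrib)
  have sw: "supp w \<subseteq> I" using y supp_diff[of y "restrict_vec v I"] supp_restrict[of v I]
    unfolding w_def by blast
  have sv0: "supp v0 \<subseteq> supp v - I" using supp_restrict[of v "supp v - I"] unfolding v0_def by blast
  have o: "inner r (Phi *v w) = 0" using orth sw by blast
  have "(norm (Phi *v w))\<^sup>2 = inner (Phi *v v0 - r) (Phi *v w)"
    by (simp add: dw power2_norm_eq_inner)
  also have "\<dots> = inner (Phi *v v0) (Phi *v w)" using o by (simp add: inner_diff_left)
  finally have pw: "(norm (Phi *v w))\<^sup>2 = inner (Phi *v v0) (Phi *v w)" .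
  have iv: "inner v0 w = 0" using sw sv0 by (intro inner_disjoint) blast
  have cu: "card (supp v0 \<union> supp w) \<le> 2*n"
  proof -
    have "supp v0 \<union> supp w \<subseteq> I \<union> supp v" using sw sv0 by blast
    then show ?thesis using card card_mono[OF finite] order_trans by blast
  qed
  have e1': "e \<le> 1" using e1 by simp
  have b: "inner (Phi *v v0) (Phi *v w) \<le> (2*e + e\<^sup>2) * norm v0 * norm w"
    using ric_bilin[OF ric e0 e1' cu] iv by simp
  have l1: "(1-e) * norm v0 \<le> norm (Phi *v v0)"
    using ric sparse_subset[of v0 "I \<union> supp v", OF _ card] sv0 unfolding RIC_def by blast
  have l2: "(1-e) * norm w \<le> norm (Phi *v w)"
    using ric sparse_subset[of w "I \<union> supp v", OF _ card] sw unfolding RIC_def by blast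
  define P where "P = norm (Phi *v w)"
  define X where "X = norm (Phi *v v0)"
  define d where "d = 2*e + e\<^sup>2"
  have d0: "0 \<le> d" using e0 by (simp add: d_def)
  have m: "((1-e) * norm v0) * ((1-e) * norm w) \<le> X * P"
    using l1 l2 e1 by (intro mult_mono) (auto simp: X_def P_def)
  have "(1-e)\<^sup>2 * P\<^sup>2 \<le> (1-e)\<^sup>2 * (d * norm v0 * norm w)"
    using pw b by (intro mult_left_mono) (auto simp: P_def d_def)
  also have "\<dots> = d * (((1-e) * norm v0) * ((1-e) * norm w))"
    by (simp add: power2_eq_square algebra_simps)
  also have "\<dots> \<le> d * (X * P)" using m d0 by (intro mult_left_mono)
  finally have k: "(1-e)\<^sup>2 * P\<^sup>2 \<le> d * (X * P)" .
  have dle: "d \<le> 2.2 * e * (1-e)\<^sup>2"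
  proof -
    have "2.2 * (1-e)\<^sup>2 = 2.2 - 4.4*e + 2.2*e\<^sup>2" by (simp add: power2_eq_square algebra_simps)
    moreover have "0 \<le> e\<^sup>2" by simp
    moreover have "e * 1000 \<le> 37" using e1 by simp
    ultimately have "2 + e \<le> 2.2 * (1-e)\<^sup>2" by linarith
    then have "e * (2 + e) \<le> e * (2.2 * (1-e)\<^sup>2)" using e0 by (intro mult_left_mono)
    then show ?thesis by (simp add: d_def power2_eq_square algebra_simps)
  qed
  have P0: "0 \<le> P" "0 \<le> X" by (simp_all add: P_def X_def)
  have "P \<le> 2.2 * e * X"
  proof (cases "P = 0")
    case True then show ?thesis using P0 e0 by simp
  next
    case False
    then have Pp: "0 < P" using P0 by simp
    have "(1-e)\<^sup>2 * P * P \<le> d * X * P" using k by (simp add: power2_eq_square mult.assoc)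
    then have "(1-e)\<^sup>2 * P \<le> d * X" using Pp by simp
    also have "\<dots> \<le> 2.2 * e * (1-e)\<^sup>2 * X" using dle P0 by (intro mult_right_mono)
    finally have "(1-e)\<^sup>2 * P \<le> (1-e)\<^sup>2 * (2.2 * e * X)" by (simp add: algebra_simps)
    moreover have "0 < (1-e)\<^sup>2" using e1 by simp
    ultimately show ?thesis by simp
  qed
  then show ?thesis using dw by (simp add: P_def X_def v0_def)
qed


lemma dbl_sum:
  fixes f g :: "'a \<Rightarrow> real"
  assumes "finite A" "finite B" "card A \<le> card B"
    and "\<And>a b. a \<in> A \<Longrightarrow> b \<in> B \<Longrightarrow> f a \<le> g b" and "\<And>b. b \<in> B \<Longrightarrow> 0 \<le> g b"
  shows "sum f A \<le> sum g B"
proof (cases "B = {}")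
  case True then show ?thesis using assms by simp
next
  case False
  then have cB: "0 < real (card B)" using assms(2) by (simp add: card_gt_0_iff)
  have "real (card B) * sum f A = (\<Sum>a\<in>A. \<Sum>b\<in>B. f a)"
    by (simp add: sum_distrib_right mult.commute)
  also have "\<dots> \<le> (\<Sum>a\<in>A. \<Sum>b\<in>B. g b)"
    by (intro sum_mono) (auto intro: assms(4))
  also have "\<dots> = real (card A) * sum g B" by simp
  also have "\<dots> \<le> real (card B) * sum g B"
    using assms(3,5) by (intro mult_right_mono) (auto intro: sum_nonneg)
  finally show ?thesis using cB by simp
qed

lemma top_bound:
  fixes u :: "real^'d"
  assumes "romp_identify n u J" "card T \<le> n"
  shows "(\<Sum>i\<in>T. (u$i)\<^sup>2) \<le> (\<Sum>i\<in>J. (u$i)\<^sup>2)"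
proof (cases "card (supp u) \<le> n")
  case True
  then have J: "J = supp u" using assms(1) unfolding romp_identify_def by simp
  have "(\<Sum>i\<in>T. (u$i)\<^sup>2) = (\<Sum>i\<in>T \<inter> supp u. (u$i)\<^sup>2)"
    by (rule sum.mono_neutral_right) (auto simp: supp_def)
  also have "\<dots> \<le> (\<Sum>i\<in>supp u. (u$i)\<^sup>2)"
    by (rule sum_mono2) auto
  finally show ?thesis using J by simp
next
  case False
  then have cJ: "card J = n" and top: "\<And>i j. i \<in> J \<Longrightarrow> j \<notin> J \<Longrightarrow> \<bar>u$j\<bar> \<le> \<bar>u$i\<bar>"
    using assms(1) unfolding romp_identify_def by auto
  have c1: "card (T - J) = card T - card (T \<inter> J)" by (simp add: card_Diff_subset_Int)
  have c2: "card (J - T) = card J - card (J \<inter> T)" by (simp add: card_Diff_subset_Int)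
  have c3: "card (T \<inter> J) \<le> card T" by (simp add: card_mono)
  have "card (T - J) \<le> card (J - T)" using c1 c2 c3 cJ assms(2) by (simp add: Int_commute)
  then have "(\<Sum>i\<in>T - J. (u$i)\<^sup>2) \<le> (\<Sum>i\<in>J - T. (u$i)\<^sup>2)"
    by (rule dbl_sum[OF finite finite]) (auto simp: abs_le_square_iff[symmetric] intro: top)
  moreover have "(\<Sum>i\<in>T. (u$i)\<^sup>2) = (\<Sum>i\<in>T \<inter> J. (u$i)\<^sup>2) + (\<Sum>i\<in>T - J. (u$i)\<^sup>2)"
    by (rule sum.Int_Diff) simp
  moreover have "(\<Sum>i\<in>J. (u$i)\<^sup>2) = (\<Sum>i\<in>J \<inter> T. (u$i)\<^sup>2) + (\<Sum>i\<in>J - T. (u$i)\<^sup>2)"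
    by (rule sum.Int_Diff) simp
  ultimately show ?thesis by (simp add: Int_commute)
qed

lemma comparable_bound:
  fixes u :: "real^'d"
  assumes "comparable u J0" "A \<subseteq> J0" "B \<subseteq> J0" "card A \<le> card B"
  shows "(\<Sum>i\<in>A. (u$i)\<^sup>2) \<le> 4 * (\<Sum>i\<in>B. (u$i)\<^sup>2)"
proof -
  have "(\<Sum>i\<in>A. (u$i)\<^sup>2) \<le> (\<Sum>i\<in>B. 4 * (u$i)\<^sup>2)"
  proof (rule dbl_sum[OF finite finite assms(4)])
    fix a b assume "a \<in> A" "b \<in> B"
    then have "\<bar>u$a\<bar> \<le> \<bar>2 * u$b\<bar>" using assms unfolding comparable_def by (auto simp: abs_mult)
    then have "(u$a)\<^sup>2 \<le> (2 * u$b)\<^sup>2" by (simp add: abs_le_square_iff)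
    then show "(u$a)\<^sup>2 \<le> 4 * (u$b)\<^sup>2" by (simp add: power_mult_distrib)
  qed simp
  then show ?thesis by (simp add: sum_distrib_left)
qed

lemma ln2_gt: "ln (2::real) > 2/3"
proof -
  have "ln ((272/100::real)^2) < ln (2^3)"
    by (subst ln_less_cancel_iff) (auto simp: power2_eq_square)
  moreover have "ln ((272/100::real)^2) = 2 * ln (272/100)" by (subst ln_realpow) auto
  moreover have "ln ((2::real)^3) = 3 * ln 2" by (subst ln_realpow) auto
  ultimately show ?thesis using ln_272_gt_1 by linarith
qed

lemma dyadic:
  fixes M x :: real
  assumes "0 \<le> x" "x \<le> M"
  shows "x \<le> M / 2^K \<or> (\<exists>k<K. M / 2^(Suc k) < x \<and> x \<le> M / 2^k)"
proof (induction K)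
  case 0 then show ?case using assms by simp
next
  case (Suc K)
  then show ?case
  proof
    assume h: "x \<le> M / 2^K"
    show ?thesis
    proof (cases "x \<le> M / 2^(Suc K)")
      case True then show ?thesis by simp
    next
      case False then show ?thesis using h by auto
    qed
  next
    assume "\<exists>k<K. M / 2^(Suc k) < x \<and> x \<le> M / 2^k"
    then show ?thesis by (meson less_SucI)
  qed
qed

lemma exK: "1 \<le> (n::nat) \<Longrightarrow> \<exists>K. n \<le> 2^K \<and> 2^K < 2*n"
proof -
  assume n: "1 \<le> n"
  have ex: "\<exists>K. n \<le> 2^K" using less_exp[of n] by (meson less_imp_le)
  define K where "K = (LEAST K. n \<le> 2^K)"
  have k1: "n \<le> 2^K" unfolding K_def by (rule LeastI_ex[OF ex])
  have "2^K < 2*n"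
  proof (cases K)
    case 0 then show ?thesis using n by simp
  next
    case (Suc K')
    then have "\<not> n \<le> 2^K'" unfolding K_def by (metis Suc K_def lessI not_less_Least)
    then show ?thesis using Suc by simp
  qed
  then show ?thesis using k1 by blast
qed


lemma K_bound:
  assumes "2 \<le> n" "(2::nat)^K < 2*n"
  shows "real K + 1/2 \<le> 4 * ln (real n)"
proof -
  have l2: "ln 2 > (2/3::real)" by (rule ln2_gt)
  have lnn: "ln 2 \<le> ln (real n)" using assms(1) by simp
  have "real ((2::nat)^K) < real (2*n)" using assms(2) by (simp only: of_nat_less_iff)
  then have "(2::real)^K < 2 * real n" by simp
  then have "ln ((2::real)^K) < ln (2 * real n)"
    using assms(1) by (subst ln_less_cancel_iff) auto
  moreover have "ln ((2::real)^K) = real K * ln 2" by (subst ln_realpow) auto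
  moreover have "ln (2 * real n) = ln 2 + ln (real n)" using assms(1) by (subst ln_mult) auto
  ultimately have h: "(real K - 1) * ln 2 < ln (real n)" by (simp add: algebra_simps)
  show ?thesis
  proof (cases "K = 0")
    case True then show ?thesis using l2 lnn by simp
  next
    case False
    then have "0 \<le> real K - 1" by simp
    then have "(real K - 1) * (2/3) \<le> (real K - 1) * ln 2" using l2 by (intro mult_left_mono) auto
    moreover have "(real K - 1) * (2/3) = 2/3 * real K - 2/3" by (simp add: field_simps)
    ultimately show ?thesis using h l2 lnn by linarith
  qed
qed

lemma reg_bound:
  fixes u :: "real^'d"
  assumes reg: "romp_regularize u J J0" and cJ: "card J \<le> n" and n2: "2 \<le> n"
  shows "(\<Sum>i\<in>J. (u$i)\<^sup>2) \<le> 4 * ln (real n) * (\<Sum>i\<in>J0. (u$i)\<^sup>2)"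
proof -
  define Q where "Q = (\<Sum>i\<in>J0. (u$i)\<^sup>2)"
  have best: "(\<Sum>i\<in>C. (u$i)\<^sup>2) \<le> Q" if "C \<subseteq> J" "comparable u C" for C
  proof -
    have "norm (restrict_vec u C) \<le> norm (restrict_vec u J0)"
      using reg that unfolding romp_regularize_def by blast
    then have "(norm (restrict_vec u C))\<^sup>2 \<le> (norm (restrict_vec u J0))\<^sup>2"
      by (simp add: power_mono)
    then show ?thesis by (simp add: norm_restrict_sq Q_def)
  qed
  have Q0: "0 \<le> Q" by (simp add: Q_def sum_nonneg)
  have lnn: "ln 2 \<le> ln (real n)" using n2 by simp
  have lnn0: "0 \<le> ln (real n)" using n2 by simp
  show ?thesis
  proof (cases "J = {}")
    case True then show ?thesis using Q0 lnn0 by (simp add: Q_def[symmetric])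
  next
    case False
    define M where "M = Max ((\<lambda>i. \<bar>u$i\<bar>) ` J)"
    have Mge: "\<bar>u$i\<bar> \<le> M" if "i \<in> J" for i unfolding M_def using that by (intro Max_ge) auto
    have "M \<in> (\<lambda>i. \<bar>u$i\<bar>) ` J" unfolding M_def using False by (intro Max_in) auto
    then obtain i0 where i0: "i0 \<in> J" "\<bar>u$i0\<bar> = M" by auto
    have M0: "0 \<le> M" using i0 by force
    have "comparable u {i0}" by (simp add: comparable_def)
    then have "(\<Sum>i\<in>{i0}. (u$i)\<^sup>2) \<le> Q" using best[of "{i0}"] i0 by blast
    moreover have "(u$i0)\<^sup>2 = M\<^sup>2" using i0(2) by (metis power2_abs)
    ultimately have MQ: "M\<^sup>2 \<le> Q" by simp
    obtain K where K: "n \<le> 2^K" "2^K < 2*n" using exK n2 by (metis one_le_numeral order_trans)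
    define C where "C k = {i\<in>J. M/2^(Suc k) < \<bar>u$i\<bar> \<and> \<bar>u$i\<bar> \<le> M/2^k}" for k
    have Csub: "C k \<subseteq> J" for k unfolding C_def by auto
    have Ccomp: "comparable u (C k)" for k
    proof -
      have e: "M/2^k = 2 * (M/2^(Suc k))" by simp
      show ?thesis unfolding comparable_def C_def using e by fastforce
    qed
    have CQ: "(\<Sum>i\<in>C k. (u$i)\<^sup>2) \<le> Q" for k using best Csub Ccomp by blast
    define P where "P = ((2::real)^K)\<^sup>2"
    have P0: "0 < P" by (simp add: P_def)
    have pe: "(u$i)\<^sup>2 \<le> (\<Sum>k<K. if i \<in> C k then (u$i)\<^sup>2 else 0) + M\<^sup>2 / P" if iJ: "i \<in> J" for i
    proof -
      have s0: "0 \<le> (\<Sum>k<K. if i \<in> C k then (u$i)\<^sup>2 else 0)" by (intro sum_nonneg) auto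
      have m0: "0 \<le> M\<^sup>2 / P" using P0 by simp
      have dy: "\<bar>u$i\<bar> \<le> M / 2^K \<or> (\<exists>k<K. M / 2^(Suc k) < \<bar>u$i\<bar> \<and> \<bar>u$i\<bar> \<le> M / 2^k)"
        using dyadic[of "\<bar>u$i\<bar>" M K] Mge[OF iJ] by simp
      from dy show ?thesis
      proof (elim disjE exE conjE)
        assume "\<bar>u$i\<bar> \<le> M / 2^K"
        then have "\<bar>u$i\<bar>\<^sup>2 \<le> (M / 2^K)\<^sup>2" by (intro power_mono) auto
        then have "(u$i)\<^sup>2 \<le> M\<^sup>2 / P" by (simp add: P_def power_divide)
        then show ?thesis using s0 by linarith
      next
        fix k assume "k < K" "M / 2^(Suc k) < \<bar>u$i\<bar>" "\<bar>u$i\<bar> \<le> M / 2^k"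
        then have kC: "i \<in> C k" and kK: "k \<in> {..<K}" using iJ by (auto simp: C_def)
        have "(if i \<in> C k then (u$i)\<^sup>2 else 0) \<le> (\<Sum>k<K. if i \<in> C k then (u$i)\<^sup>2 else 0)"
          by (rule member_le_sum[OF kK]) auto
        then show ?thesis using kC m0 by simp
      qed
    qed
    have "(\<Sum>i\<in>J. (u$i)\<^sup>2) \<le> (\<Sum>i\<in>J. (\<Sum>k<K. if i \<in> C k then (u$i)\<^sup>2 else 0) + M\<^sup>2 / P)"
      using pe by (intro sum_mono) auto
    also have "\<dots> = (\<Sum>k<K. \<Sum>i\<in>J. if i \<in> C k then (u$i)\<^sup>2 else 0) + real (card J) * (M\<^sup>2 / P)"
      by (simp add: sum.distrib sum.swap[of _ J])
    also have "(\<Sum>k<K. \<Sum>i\<in>J. if i \<in> C k then (u$i)\<^sup>2 else 0) = (\<Sum>k<K. \<Sum>i\<in>C k. (u$i)\<^sup>2)"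
    proof -
      have ck: "(\<Sum>i\<in>J. if i \<in> C k then (u$i)\<^sup>2 else 0) = (\<Sum>i\<in>C k. (u$i)\<^sup>2)" for k
      proof -
        have jc: "J \<inter> C k = C k" using Csub by blast
        have "(\<Sum>i\<in>J. if i \<in> C k then (u$i)\<^sup>2 else 0) = (\<Sum>i\<in>J \<inter> C k. (u$i)\<^sup>2)"
          by (rule sum.inter_restrict[symmetric]) simp
        then show ?thesis by (simp only: jc)
      qed
      show ?thesis by (simp add: ck)
    qed
    also have "(\<Sum>k<K. \<Sum>i\<in>C k. (u$i)\<^sup>2) \<le> (\<Sum>k<K. Q)" by (intro sum_mono CQ)
    also have "real (card J) * (M\<^sup>2 / P) \<le> real n * (Q / P)"
      using cJ MQ P0 by (intro mult_mono divide_right_mono) auto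
    also have "real n * (Q / P) \<le> Q / 2"
    proof -
      have "real n * real n \<le> P" using K(1) by (simp add: P_def power2_eq_square mult_mono flip: of_nat_le_iff)
      moreover have "2 * real n \<le> real n * real n" using n2 by (intro mult_right_mono) auto
      ultimately have "2 * real n \<le> P" by linarith
      then have "Q * (2 * real n) \<le> Q * P" using Q0 by (intro mult_left_mono)
      then have "real n * Q * 2 \<le> Q * P" by (simp add: algebra_simps)
      then show ?thesis using P0 by (simp add: field_simps)
    qed
    finally have "(\<Sum>i\<in>J. (u$i)\<^sup>2) \<le> (real K + 1/2) * Q" by (simp add: algebra_simps)
    also have "\<dots> \<le> 4 * ln (real n) * Q" using K_bound[OF n2 K(2)] Q0 by (intro mult_right_mono)
    finally show ?thesis by (simp add: Q_def)
  qed
qed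


lemma sq_le_imp: "0 \<le> (x::real) \<Longrightarrow> 0 \<le> c \<Longrightarrow> x\<^sup>2 \<le> c * x \<Longrightarrow> x \<le> c"
  by (cases "x = 0") (auto simp: power2_eq_square)

lemma inner_transpose: "inner (transpose Phi *v (q::real^'N)) (z::real^'d) = inner q (Phi *v z)"
  by (simp add: dot_lmul_matrix)

lemma restrict_diff: "restrict_vec (a - b) T = restrict_vec a T - restrict_vec b T"
  by (simp add: vec_eq_iff)

lemma tr_bound:
  fixes Phi :: "real^'d^'N"
  assumes "RIC Phi m e" "0 \<le> e" "card T \<le> m"
  shows "norm (restrict_vec (transpose Phi *v q) T) \<le> (1+e) * norm q"
proof -
  define z where "z = restrict_vec (transpose Phi *v q) T"
  have "supp z \<subseteq> T" using supp_restrict[of _ T] unfolding z_def by blast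
  then have sz: "sparse m z" using sparse_subset assms(3) by blast
  have pz: "norm (Phi *v z) \<le> (1+e) * norm z" using assms(1) sz unfolding RIC_def by blast
  have "(norm z)\<^sup>2 = inner (transpose Phi *v q) z" by (simp add: z_def inner_restrict)
  also have "\<dots> = inner q (Phi *v z)" by (rule inner_transpose)
  also have "\<dots> \<le> norm q * norm (Phi *v z)" by (rule norm_cauchy_schwarz)
  also have "\<dots> \<le> norm q * ((1+e) * norm z)"
    using pz by (intro mult_left_mono) auto
  finally have "(norm z)\<^sup>2 \<le> ((1+e) * norm q) * norm z" by (simp add: algebra_simps)
  moreover have "0 \<le> (1+e) * norm q" using assms(2) by simp
  ultimately have "norm z \<le> (1+e) * norm q" using sq_le_imp[OF norm_ge_zero] by blast
  then show ?thesis by (simp add: z_def)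
qed

lemma gram_bound:
  fixes Phi :: "real^'d^'N"
  assumes "RIC Phi m e" "0 \<le> e" "e \<le> 1" "card (T \<union> supp a) \<le> m"
  shows "norm (restrict_vec (transpose Phi *v (Phi *v a) - a) T) \<le> (2*e + e\<^sup>2) * norm a"
proof -
  define z where "z = restrict_vec (transpose Phi *v (Phi *v a) - a) T"
  have "supp a \<union> supp z \<subseteq> T \<union> supp a" using supp_restrict unfolding z_def by blast
  then have cu: "card (supp a \<union> supp z) \<le> m" using assms(4) card_mono[OF finite] order_trans by blast
  have "(norm z)\<^sup>2 = inner (transpose Phi *v (Phi *v a) - a) z" by (simp add: z_def inner_restrict)
  also have "\<dots> = inner (Phi *v a) (Phi *v z) - inner a z" by (simp add: inner_diff_left dot_lmul_matrix)
  also have "\<dots> \<le> (2*e + e\<^sup>2) * norm a * norm z" using ric_bilin[OF assms(1-3) cu] by simp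
  finally have "(norm z)\<^sup>2 \<le> ((2*e + e\<^sup>2) * norm a) * norm z" by simp
  moreover have "0 \<le> (2*e + e\<^sup>2) * norm a" using assms(2) by simp
  ultimately have "norm z \<le> (2*e + e\<^sup>2) * norm a" using sq_le_imp[OF norm_ge_zero] by blast
  then show ?thesis by (simp add: z_def)
qed

lemma card_union_bound:
  assumes "card (I - S) \<le> card (I \<inter> S)" "card S \<le> n" "finite I" "finite S"
  shows "card (I \<union> S) \<le> 2*n"
proof -
  have "I \<union> S = (I - S) \<union> S" by blast
  moreover have "card ((I - S) \<union> S) = card (I - S) + card S" using assms(3,4) by (intro card_Un_disjoint) auto
  ultimately have "card (I \<union> S) = card (I - S) + card S" by simp
  moreover have "card (I \<inter> S) \<le> card S" using assms(4) by (simp add: card_mono)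
  ultimately show ?thesis using assms(1,2) by linarith
qed

lemma J_supp:
  assumes "romp_identify n u J"
  shows "J \<subseteq> supp u"
proof (cases "card (supp u) \<le> n")
  case True then show ?thesis using assms unfolding romp_identify_def by simp
next
  case False
  then have cJ: "card J = n" and top: "\<And>i j. i \<in> J \<Longrightarrow> j \<notin> J \<Longrightarrow> \<bar>u$j\<bar> \<le> \<bar>u$i\<bar>"
    using assms unfolding romp_identify_def by auto
  show ?thesis
  proof
    fix i assume iJ: "i \<in> J"
    show "i \<in> supp u"
    proof (rule ccontr)
      assume "i \<notin> supp u"
      then have "u$i = 0" by (simp add: supp_def)
      then have "supp u \<subseteq> J - {i}" using top[OF iJ] by (auto simp: supp_def)
      then have "card (supp u) \<le> card (J - {i})" by (simp add: card_mono)
      also have "card (J - {i}) < card J" by (rule card_Diff1_less[OF finite iJ])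
      also have "card J = n" by (rule cJ)
      finally show False using False by simp
    qed
  qed
qed

lemma J_card:
  assumes "romp_identify n u J"
  shows "card J \<le> n"
  using assms unfolding romp_identify_def by (auto split: if_splits)


lemma step_core:
  fixes Phi :: "real^'d^'N" and v :: "real^'d"
  assumes ric: "RIC Phi (2*n) e" and e0: "0 \<le> e" and e1: "e \<le> 0.037"
    and ecase: "e = 0 \<or> (2 \<le> n \<and> e\<^sup>2 * ln (real n) \<le> 0.0009)"
    and sv: "card (supp v) \<le> n"
    and y: "supp y \<subseteq> I" and r: "r = Phi *v v - Phi *v y"
    and orth: "\<forall>z. supp z \<subseteq> I \<longrightarrow> inner r (Phi *v z) = 0"
    and inv: "card (I - supp v) \<le> card (I \<inter> supp v)"
    and r0: "r \<noteq> 0"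
    and ident: "romp_identify n (transpose Phi *v r) J"
    and reg: "romp_regularize (transpose Phi *v r) J J0"
  shows "J0 \<inter> I = {} \<and> card (J0 - supp v) \<le> card (J0 \<inter> supp v)"
proof -
  define u where "u = transpose Phi *v r"
  define S where "S = supp v"
  define v0 where "v0 = restrict_vec v (S - I)"
  define x0 where "x0 = Phi *v v0"
  have e1': "e \<le> 1" using e1 by simp
  have e1n: "e \<le> 37/1000" using e1 by simp
  have cIS: "card (I \<union> S) \<le> 2*n"
    using card_union_bound[OF inv[folded S_def] sv[folded S_def] finite finite] .
  have uI: "u$i = 0" if "i \<in> I" for i
  proof -
    have "u$i = inner u (axis i 1)" by (simp add: inner_axis)
    also have "\<dots> = inner r (Phi *v axis i 1)" by (simp add: u_def dot_lmul_matrix)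
    also have "\<dots> = 0"
    proof -
      have "supp (axis i (1::real)) \<subseteq> I" using that by (auto simp: supp_def axis_def)
      then show ?thesis using orth by blast
    qed
    finally show ?thesis .
  qed
  have J0J: "J0 \<subseteq> J" using reg unfolding romp_regularize_def by blast
  have Jsu: "J \<subseteq> supp u" using J_supp ident unfolding u_def by blast
  have disj: "J0 \<inter> I = {}" using J0J Jsu uI by (auto simp: supp_def)
  have cJ: "card J \<le> n" using J_card ident by blast
  have c34: "norm (x0 - r) \<le> 2.2*e*norm x0"
    using core34[OF ric e0 e1 y r orth cIS[unfolded S_def]] by (simp add: x0_def v0_def S_def)
  have sv0: "supp v0 \<subseteq> S - I" using supp_restrict[of v "S - I"] unfolding v0_def by blast
  have cv0: "card (supp v0) \<le> n"
  proof -
    have "supp v0 \<subseteq> S" using sv0 by blast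
    then have "card (supp v0) \<le> card S" by (simp add: card_mono)
    then show ?thesis using sv S_def by simp
  qed
  have v0ne: "v0 \<noteq> 0"
  proof
    assume "v0 = 0"
    then have "x0 = 0" by (simp add: x0_def)
    then have "norm r \<le> 0" using c34 by simp
    then show False using r0 by simp
  qed
  have nv: "0 < norm v0" using v0ne by simp
  have sp0: "sparse (2*n) v0" using cv0 unfolding sparse_def by simp
  have x0le: "norm x0 \<le> (1+e)*norm v0" using ric sp0 unfolding RIC_def x0_def by blast
  define \<kappa> where "\<kappa> = (2*e + e\<^sup>2) + (1+e)*(2.2*e*(1+e))"
  have approx: "norm (restrict_vec u T - restrict_vec v0 T) \<le> \<kappa> * norm v0" if cT: "card T \<le> n" for T
  proof -
    have eq: "restrict_vec u T - restrict_vec v0 T = restrict_vec (transpose Phi *v (Phi *v v0) - v0) T - restrict_vec (transpose Phi *v (x0 - r)) T"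
      by (simp add: u_def x0_def vec_eq_iff vector_matrix_mult_diff_distrib)
    have c1: "card (T \<union> supp v0) \<le> 2*n" using card_Un_le[of T "supp v0"] cT cv0 by linarith
    have g: "norm (restrict_vec (transpose Phi *v (Phi *v v0) - v0) T) \<le> (2*e+e\<^sup>2)*norm v0"
      by (rule gram_bound[OF ric e0 e1' c1])
    have t: "norm (restrict_vec (transpose Phi *v (x0 - r)) T) \<le> (1+e)*norm (x0 - r)"
      by (rule tr_bound[OF ric e0]) (use cT in simp)
    have a1: "2.2*e*norm x0 \<le> 2.2*e*((1+e)*norm v0)" using x0le e0 by (intro mult_left_mono) auto
    have "(1+e)*norm (x0 - r) \<le> (1+e)*(2.2*e*((1+e)*norm v0))"
      using c34 a1 e0 by (intro mult_left_mono) auto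
    then have t2: "norm (restrict_vec (transpose Phi *v (x0 - r)) T) \<le> (1+e)*(2.2*e*(1+e)) * norm v0"
      using t by (simp add: algebra_simps)
    have "norm (restrict_vec u T - restrict_vec v0 T) \<le> norm (restrict_vec (transpose Phi *v (Phi *v v0) - v0) T) + norm (restrict_vec (transpose Phi *v (x0 - r)) T)"
      unfolding eq by (rule norm_triangle_ineq4)
    also have "\<dots> \<le> (2*e+e\<^sup>2)*norm v0 + (1+e)*(2.2*e*(1+e)) * norm v0" using g t2 by linarith
    also have "\<dots> = \<kappa> * norm v0" by (simp add: \<kappa>_def algebra_simps)
    finally show ?thesis .
  qed
  define B where "B = J0 - S"
  define A where "A = J0 \<inter> S"
  have cB: "card B \<le> n"
  proof -
    have "card B \<le> card J" using J0J unfolding B_def by (intro card_mono) auto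
    then show ?thesis using cJ by simp
  qed
  have rB: "restrict_vec v0 B = 0" using sv0 by (auto simp: vec_eq_iff B_def v0_def)
  have eB: "norm (restrict_vec u B) \<le> \<kappa> * norm v0" using approx[OF cB] rB by simp
  have cT0: "card (S - I) \<le> n"
  proof -
    have "card (S - I) \<le> card S" by (intro card_mono) auto
    then show ?thesis using sv S_def by simp
  qed
  have rT0: "restrict_vec v0 (S - I) = v0" by (simp add: vec_eq_iff v0_def)
  have eT0: "norm (restrict_vec u (S - I) - v0) \<le> \<kappa> * norm v0" using approx[OF cT0] rT0 by simp
  have lowT0: "(1 - \<kappa>) * norm v0 \<le> norm (restrict_vec u (S - I))"
  proof -
    have "norm v0 \<le> norm (restrict_vec u (S - I)) + norm (v0 - restrict_vec u (S - I))"
      by (rule norm_triangle_sub)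
    then show ?thesis using eT0 by (simp add: norm_minus_commute algebra_simps)
  qed
  from ecase show ?thesis
  proof
    assume "e = 0"
    then have "\<kappa> = 0" by (simp add: \<kappa>_def)
    then have "restrict_vec u B = 0" using eB by simp
    then have "\<forall>b\<in>B. u$b = 0" by (metis restrict_nth zero_index)
    moreover have "B \<subseteq> supp u" using J0J Jsu unfolding B_def by blast
    ultimately have "B = {}" by (auto simp: supp_def)
    then have c0: "card (J0 - S) = 0" unfolding B_def by (simp only: card.empty)
    show ?thesis using disj c0 unfolding S_def by (metis le0)
  next
    assume h: "2 \<le> n \<and> e\<^sup>2 * ln (real n) \<le> 0.0009"
    then have n2: "2 \<le> n" and eln: "e\<^sup>2 * ln (real n) \<le> 9/10000" by auto
    have lnn: "0 \<le> ln (real n)" using n2 by simp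
    have "card B \<le> card A"
    proof (rule ccontr)
      assume "\<not> card B \<le> card A"
      then have cAB: "card A \<le> card B" by simp
      have comp: "comparable u J0" using reg unfolding romp_regularize_def u_def by blast
      have sA: "(\<Sum>i\<in>A. (u$i)\<^sup>2) \<le> 4 * (\<Sum>i\<in>B. (u$i)\<^sup>2)"
        by (rule comparable_bound[OF comp _ _ cAB]) (auto simp: A_def B_def)
      have sJ0: "(\<Sum>i\<in>J0. (u$i)\<^sup>2) = (\<Sum>i\<in>A. (u$i)\<^sup>2) + (\<Sum>i\<in>B. (u$i)\<^sup>2)"
        unfolding A_def B_def by (rule sum.Int_Diff) simp
      have sB: "(\<Sum>i\<in>B. (u$i)\<^sup>2) \<le> (\<kappa> * norm v0)\<^sup>2"
        using eB by (simp add: norm_restrict_sq[symmetric] power_mono)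
      have up: "(\<Sum>i\<in>J0. (u$i)\<^sup>2) \<le> 5 * (\<kappa> * norm v0)\<^sup>2" using sA sJ0 sB by linarith
      have kle: "\<kappa> \<le> 9/2 * e"
      proof -
        have "(1+e)*(1+e) \<le> 108/100"
        proof -
          have "(1+e)*(1+e) \<le> 1037/1000 * (1037/1000)" using e0 e1n by (intro mult_mono) auto
          then show ?thesis by simp
        qed
        then have "2 + e + 2.2 * ((1+e)*(1+e)) \<le> 9/2" using e1n by linarith
        then have "e * (2 + e + 2.2 * ((1+e)*(1+e))) \<le> e * (9/2)" using e0 by (intro mult_left_mono)
        moreover have "\<kappa> = e * (2 + e + 2.2 * ((1+e)*(1+e)))" by (simp add: \<kappa>_def power2_eq_square field_simps)
        ultimately show ?thesis by linarith
      qed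
      have k0: "0 \<le> \<kappa>" using e0 by (simp add: \<kappa>_def)
      have kup: "\<kappa> \<le> 1665/10000" using kle e1n by linarith
      have "\<kappa>\<^sup>2 \<le> (9/2 * e)\<^sup>2" using kle k0 by (intro power_mono) auto
      then have k2: "\<kappa>\<^sup>2 \<le> 81/4 * e\<^sup>2" by (simp add: power2_eq_square)
      have "\<kappa>\<^sup>2 * ln (real n) \<le> (81/4 * e\<^sup>2) * ln (real n)" using k2 lnn by (rule mult_right_mono)
      then have "\<kappa>\<^sup>2 * ln (real n) \<le> 81/4 * (e\<^sup>2 * ln (real n))" by (simp add: mult.assoc)
      then have kln: "\<kappa>\<^sup>2 * ln (real n) \<le> 18225/1000000" using eln by linarith
      have low1: "((1 - \<kappa>) * norm v0)\<^sup>2 \<le> (norm (restrict_vec u (S - I)))\<^sup>2"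
        using lowT0 kup by (intro power_mono) auto
      have "(norm (restrict_vec u (S - I)))\<^sup>2 \<le> (\<Sum>i\<in>J. (u$i)\<^sup>2)"
        unfolding norm_restrict_sq by (rule top_bound[OF ident[folded u_def] cT0])
      also have "\<dots> \<le> 4 * ln (real n) * (\<Sum>i\<in>J0. (u$i)\<^sup>2)"
        by (rule reg_bound[OF reg[folded u_def] cJ n2])
      also have "\<dots> \<le> 4 * ln (real n) * (5 * (\<kappa> * norm v0)\<^sup>2)"
        using up lnn by (intro mult_left_mono) auto
      finally have ch: "(norm (restrict_vec u (S - I)))\<^sup>2 \<le> 4 * ln (real n) * (5 * (\<kappa> * norm v0)\<^sup>2)" .
      have eqL: "((1 - \<kappa>) * norm v0)\<^sup>2 = (1 - \<kappa>)\<^sup>2 * (norm v0)\<^sup>2" by (simp add: power_mult_distrib)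
      have eqR: "4 * ln (real n) * (5 * (\<kappa> * norm v0)\<^sup>2) = (20 * (\<kappa>\<^sup>2 * ln (real n))) * (norm v0)\<^sup>2"
        by (simp add: power_mult_distrib algebra_simps)
      have "(1 - \<kappa>)\<^sup>2 * (norm v0)\<^sup>2 \<le> (20 * (\<kappa>\<^sup>2 * ln (real n))) * (norm v0)\<^sup>2"
        using low1 ch eqL eqR by linarith
      then have "(1 - \<kappa>)\<^sup>2 \<le> 20 * (\<kappa>\<^sup>2 * ln (real n))" using nv by simp
      also have "\<dots> \<le> 3645/10000" using kln by simp
      finally have f1: "(1 - \<kappa>)\<^sup>2 \<le> 3645/10000" .
      have "8335/10000 * (8335/10000) \<le> (1 - \<kappa>) * (1 - \<kappa>)" using kup by (intro mult_mono) auto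
      then show False using f1 by (simp add: power2_eq_square)
    qed
    then show ?thesis using disj by (simp add: A_def B_def S_def)
  qed
qed


lemma invariant:
  fixes Phi :: "real^'d^'N" and v :: "real^'d"
  assumes ric: "RIC Phi (2*n) e" and e0: "0 \<le> e" and e1: "e \<le> 0.037"
    and ecase: "e = 0 \<or> (2 \<le> n \<and> e\<^sup>2 * ln (real n) \<le> 0.0009)"
    and sv: "card (supp v) \<le> n"
    and st: "romp_state Phi (Phi *v v) n I r"
  shows "card (I - supp v) \<le> card (I \<inter> supp v)"
  using st
proof induction
  case init
  show ?case by simp
next
  case (step I r J J0 y)
  obtain y0 where y0: "supp y0 \<subseteq> I" "r = Phi *v v - Phi *v y0"
      "\<forall>z. supp z \<subseteq> I \<longrightarrow> inner r (Phi *v z) = 0"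
    using state_orth[OF step.hyps(1)] by blast
  have sc: "J0 \<inter> I = {} \<and> card (J0 - supp v) \<le> card (J0 \<inter> supp v)"
    by (rule step_core[OF ric e0 e1 ecase sv y0 step.IH step.hyps(2) step.hyps(3) step.hyps(4)])
  define S where "S = supp v"
  have d1: "(I \<union> J0) - S = (I - S) \<union> (J0 - S)" by blast
  have d2: "(I \<union> J0) \<inter> S = (I \<inter> S) \<union> (J0 \<inter> S)" by blast
  have c1: "card ((I - S) \<union> (J0 - S)) = card (I - S) + card (J0 - S)"
    using sc by (intro card_Un_disjoint) auto
  have c2: "card ((I \<inter> S) \<union> (J0 \<inter> S)) = card (I \<inter> S) + card (J0 \<inter> S)"
    using sc by (intro card_Un_disjoint) auto
  show ?case using step.IH sc c1 c2 unfolding S_def[symmetric] d1 d2 by linarith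
qed

theorem lemma3p4:
  fixes Phi :: "real ^ 'd ^ 'N" and v :: "real ^ 'd" and n :: nat
    and eps :: real and I :: "'d set" and r :: "real ^ 'N"
  assumes "eps = 0.03 / sqrt (ln (real n))"
    and "RIC Phi (2 * n) eps"
    and "v \<noteq> 0" and "sparse n v"
    and "romp_state Phi (Phi *v v) n I r"
    and "r \<noteq> 0"
  shows "norm (Phi *v restrict_vec v (supp v - I) - r)
           \<le> 2.2 * eps * norm (Phi *v restrict_vec v (supp v - I))"
proof -
  have sv: "card (supp v) \<le> n" using assms(4) unfolding sparse_def .
  have "supp v \<noteq> {}" using assms(3) by simp
  then have "1 \<le> card (supp v)" by (simp add: Suc_le_eq card_gt_0_iff)
  then have n1: "1 \<le> n" using sv by simp
  have efacts: "0 \<le> eps \<and> eps \<le> 0.037 \<and> (eps = 0 \<or> (2 \<le> n \<and> eps\<^sup>2 * ln (real n) \<le> 0.0009))"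
  proof (cases "n = 1")
    case True then show ?thesis using assms(1) by simp
  next
    case False
    then have n2: "2 \<le> n" using n1 by simp
    define L where "L = ln (real n)"
    have "ln 2 \<le> L" using n2 unfolding L_def by simp
    then have L23: "2/3 < L" using ln2_gt by linarith
    have sL: "0 < sqrt L" using L23 by simp
    have ep: "0 < eps" using assms(1) sL by (simp add: L_def)
    have e2: "eps\<^sup>2 = 9/10000 / L" using assms(1) L23 by (simp add: L_def power_divide)
    then have e2L: "eps\<^sup>2 * L = 9/10000" using L23 by simp
    have "eps\<^sup>2 * (2/3) \<le> eps\<^sup>2 * L" using L23 by (intro mult_left_mono) auto
    then have "eps\<^sup>2 \<le> 1369/1000000" using e2L by simp
    then have "eps\<^sup>2 \<le> (37/1000)\<^sup>2" by (simp add: power2_eq_square)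
    then have "eps \<le> 37/1000" using power2_le_imp_le[of eps "37/1000"] by simp
    then show ?thesis using ep e2L n2 by (simp add: L_def)
  qed
  then have e0: "0 \<le> eps" and e1: "eps \<le> 0.037"
    and ecase: "eps = 0 \<or> (2 \<le> n \<and> eps\<^sup>2 * ln (real n) \<le> 0.0009)" by auto
  have inv: "card (I - supp v) \<le> card (I \<inter> supp v)"
    by (rule invariant[OF assms(2) e0 e1 ecase sv assms(5)])
  obtain y where y: "supp y \<subseteq> I" "r = Phi *v v - Phi *v y"
      "\<forall>z. supp z \<subseteq> I \<longrightarrow> inner r (Phi *v z) = 0"
    using state_orth[OF assms(5)] by blast
  have cIS: "card (I \<union> supp v) \<le> 2*n" by (rule card_union_bound[OF inv sv finite finite])
  show ?thesis by (rule core34[OF assms(2) e0 e1 y cIS])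
qed

end
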